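(* Let $d\ge2$, $p_c(z)=\bar z^d+c$, let $W$ be a hyperbolic component of odd period $k$ and let $c_0\in\partial W$ be a parameter for which $p_{c_0}$ has a simple parabolic orbit $z_0,\dots,z_{k-1}$. Let $\varphi_{c_0}$ be a local holomorphic coordinate near $z_0$ with $\varphi_{c_0}(z_0)=0$ and $\varphi_{c_0}\circ p_{c_0}^{\circ 2k}\circ\varphi_{c_0}^{-1}(\zeta)=\zeta+\zeta^2h(\zeta)$ with $h(0)=1$. Then for every $\varepsilon>0$ one can choose a neighborhood $V$ of $c_0$ in parameter space and a neighborhood $U$ of $z_0$ in the dynamical plane such that for every $c\in V$ there is a holomorphic coordinate $\varphi_c:U\to\mathbb{C}$ and a number $a_c\in\mathbb{C}$ satisfying $$f_c(\zeta):=\varphi_c\circ p_c^{\circ 2k}\circ\varphi_c^{-1}(\zeta)=\zeta+(\zeta^2-a_c^2)h_c(\zeta)$$ with $h_c$ holomorphic and $|h_c(\zeta)-1|<\varepsilon$ for all $\zeta\in\varphi_c(U)$.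
   Context: A hyperbolic component of period $n$ is a connected component of the set of parameters $c$ for which $p_c$ has an attracting periodic orbit of period $n$. A periodic orbit of odd period $k$ is parabolic if $(p_c^{\circ2k})'=1$ at its points ($p_c^{\circ2k}$ is holomorphic), and simple if $p_c^{\circ2k}(z_0+w)=z_0+w+aw^2+O(w^3)$ with $a\ne0$. *)

theory Defs
  imports "HOL-Analysis.Analysis" "HOL-Library.Landau_Symbols"
begin

definition tric :: "nat \<Rightarrow> complex \<Rightarrow> complex \<Rightarrow> complex" where
  "tric d c z = cnj z ^ d + c"

definition exact_periodic :: "nat \<Rightarrow> complex \<Rightarrow> nat \<Rightarrow> complex \<Rightarrow> bool" where
  "exact_periodic d c n z \<longleftrightarrow> 0 < n \<and> (tric d c ^^ n) z = z \<and>
     (\<forall>m. 0 < m \<and> m < n \<longrightarrow> (tric d c ^^ m) z \<noteq> z)"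

text \<open>p_c has an attracting periodic orbit of period n (the second iterate of the first
  return map is holomorphic; attracting means its multiplier has modulus < 1).\<close>
definition has_attracting_orbit :: "nat \<Rightarrow> complex \<Rightarrow> nat \<Rightarrow> bool" where
  "has_attracting_orbit d c n \<longleftrightarrow>
     (\<exists>z. exact_periodic d c n z \<and> norm (deriv (tric d c ^^ (2*n)) z) < 1)"

definition hyperbolic_component :: "nat \<Rightarrow> nat \<Rightarrow> complex set \<Rightarrow> bool" where
  "hyperbolic_component d n W \<longleftrightarrow> W \<in> components {c. has_attracting_orbit d c n}"

definition parabolic_orbit :: "nat \<Rightarrow> complex \<Rightarrow> nat \<Rightarrow> complex \<Rightarrow> bool" where
  "parabolic_orbit d c k z0 \<longleftrightarrow> exact_periodic d c k z0 \<and>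
     (\<forall>j<k. deriv (tric d c ^^ (2*k)) ((tric d c ^^ j) z0) = 1)"

definition simple_parabolic_orbit :: "nat \<Rightarrow> complex \<Rightarrow> nat \<Rightarrow> complex \<Rightarrow> bool" where
  "simple_parabolic_orbit d c k z0 \<longleftrightarrow> parabolic_orbit d c k z0 \<and>
     (\<exists>a. a \<noteq> 0 \<and>
        (\<lambda>w. (tric d c ^^ (2*k)) (z0 + w) - z0 - w - a * w^2) \<in> O[at 0](\<lambda>w. w^3))"

end

theory Submission
  imports Defs "HOL-Complex_Analysis.Complex_Analysis"
begin


lemma factor_one:
  fixes G :: "complex \<Rightarrow> complex"
  assumes "G holomorphic_on UNIV" "G w1 = 0"
  obtains F where "F holomorphic_on UNIV" "\<And>w. G w = (w - w1) * F w" "F w1 = deriv G w1"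
proof -
  define F where "F = (\<lambda>z. if z = w1 then deriv G w1 else (G z - G w1) / (z - w1))"
  have "F holomorphic_on UNIV" unfolding F_def by (rule pole_lemma) (use assms in auto)
  moreover have "\<And>w. G w = (w - w1) * F w" using assms(2) by (auto simp: F_def)
  moreover have "F w1 = deriv G w1" by (simp add: F_def)
  ultimately show ?thesis using that by blast
qed

lemma zorder_f2:
  fixes a :: complex assumes "a \<noteq> 0"
  shows "zorder (\<lambda>p. a * p^2) 0 = 2"
  by (rule zorder_eqI[where S=UNIV and g="\<lambda>_. a"]) (use assms in auto)

lemma core_rouche:
  fixes G :: "complex \<Rightarrow> complex" and a :: complex and \<rho> :: real
  assumes holo: "G holomorphic_on UNIV" and a: "a \<noteq> 0" and rho: "\<rho> > 0"
    and bd: "\<And>w. norm w = \<rho> \<Longrightarrow> norm (G w - a * w^2) < norm a * \<rho>^2"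
  shows "(\<Sum>p\<in>{p\<in>ball 0 (2*\<rho>). G p = 0}. winding_number (circlepath 0 \<rho>) p * of_int (zorder G p)) = 2"
    and "\<not> G constant_on UNIV"
    and "finite {p\<in>ball 0 (2*\<rho>). G p = 0}"
proof -
  show nc: "\<not> G constant_on UNIV"
  proof
    assume "G constant_on UNIV"
    then obtain K where K: "\<And>w. G w = K" unfolding constant_on_def by auto
    have 1: "norm (K - a * \<rho>^2) < norm a * \<rho>^2"
      using bd[of "of_real \<rho>"] rho K by (simp add: power2_eq_square)
    have 2: "norm (K + a * \<rho>^2) < norm a * \<rho>^2"
      proof -
      have "(\<i> * complex_of_real \<rho>) ^ 2 = - (complex_of_real \<rho> ^ 2)" by (simp add: power_mult_distrib)
      then show ?thesis using bd[of "\<i> * of_real \<rho>"] rho K by (simp add: norm_mult)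
    qed
    have "norm (2 * a * \<rho>^2) \<le> norm (K + a * \<rho>^2) + norm (K - a * \<rho>^2)"
    proof -
      have "2 * a * \<rho>^2 = (K + a * \<rho>^2) - (K - a * \<rho>^2)" by (simp add: algebra_simps)
      then show ?thesis by (metis norm_triangle_ineq4)
    qed
    also have "\<dots> < 2 * (norm a * \<rho>^2)" using 1 2 by linarith
    finally show False using rho by (simp add: norm_mult norm_power)
  qed
  have fin0: "finite {z\<in>cball 0 (2*\<rho>). G z = 0}"
    by (rule holomorphic_compact_finite_zeros[OF holo]) (use nc in auto)
  show fin: "finite {p\<in>ball 0 (2*\<rho>). G p = 0}"
    by (rule finite_subset[OF _ fin0]) auto
  define f where "f = (\<lambda>p::complex. a * p^2)"
  define g where "g = (\<lambda>p. G p - a * p^2)"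
  have fg: "(\<lambda>p. f p + g p) = G" by (auto simp: f_def g_def)
  have zf: "{p\<in>ball 0 (2*\<rho>). f p = 0} = {0}" using a rho by (auto simp: f_def)
  have R: "(\<Sum>p\<in>{p\<in>ball 0 (2*\<rho>). (\<lambda>p. f p + g p) p = 0}. winding_number (circlepath 0 \<rho>) p * zorder (\<lambda>p. f p + g p) p)
          = (\<Sum>p\<in>{p\<in>ball 0 (2*\<rho>). f p = 0}. winding_number (circlepath 0 \<rho>) p * zorder f p)"
  proof (rule Rouche_theorem)
    show "finite {p \<in> ball 0 (2 * \<rho>). f p + g p = 0}" using fin fg by metis
    show "finite {p \<in> ball 0 (2 * \<rho>). f p = 0}" using zf by simp
    show "f holomorphic_on ball 0 (2 * \<rho>)" unfolding f_def by (intro holomorphic_intros)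
    show "g holomorphic_on ball 0 (2 * \<rho>)" unfolding g_def
      by (intro holomorphic_intros holomorphic_on_subset[OF holo]) auto
    show "path_image (circlepath 0 \<rho>) \<subseteq> ball 0 (2 * \<rho>)" using rho by auto
    show "\<forall>z\<in>path_image (circlepath 0 \<rho>). cmod (g z) < cmod (f z)"
      using rho bd by (auto simp: f_def g_def norm_mult norm_power)
    show "\<forall>z. z \<notin> ball 0 (2 * \<rho>) \<longrightarrow> winding_number (circlepath 0 \<rho>) z = 0"
      using rho by (intro allI impI winding_number_zero_outside[of _ "cball 0 \<rho>"]) auto
  qed auto
  have "(\<Sum>p\<in>{p\<in>ball 0 (2*\<rho>). f p = 0}. winding_number (circlepath 0 \<rho>) p * zorder f p) = 2"
    using zf zorder_f2[OF a] rho by (simp add: f_def winding_number_circlepath)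
  moreover have fg': "\<And>p. f p + g p = G p" by (auto simp: f_def g_def)
  ultimately show "(\<Sum>p\<in>{p\<in>ball 0 (2*\<rho>). G p = 0}. winding_number (circlepath 0 \<rho>) p * of_int (zorder G p)) = 2"
    using R unfolding fg' fg by simp
qed

lemma double_zero_deriv:
  fixes G :: "complex \<Rightarrow> complex"
  assumes holo: "G holomorphic_on UNIV" and z: "G w1 = 0" and nz: "G w0 \<noteq> 0"
    and ord: "zorder G w1 = 2"
  shows "deriv G w1 = 0"
proof -
  obtain r where r: "r > 0" "zor_poly G w1 holomorphic_on cball w1 r"
    "\<forall>w\<in>cball w1 r. G w = zor_poly G w1 w * (w - w1) ^ nat (zorder G w1)"
    using zorder_exist_zero[OF holo, of w1] nz by auto
  define g where "g = zor_poly G w1"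
  have eq: "\<And>w. w \<in> ball w1 r \<Longrightarrow> g w * (w - w1)^2 = G w"
    using r(3) ord by (auto simp: g_def)
  have gh: "g holomorphic_on ball w1 r" using r(2) by (auto simp: g_def intro: holomorphic_on_subset)
  have dg: "(g has_field_derivative deriv g w1) (at w1)"
    by (rule holomorphic_derivI[OF gh]) (use r in auto)
  have d2: "((\<lambda>w. (w - w1)^2) has_field_derivative 0) (at w1)"
    by (auto intro!: derivative_eq_intros)
  have "((\<lambda>w. g w * (w - w1)^2) has_field_derivative
          (deriv g w1 * (w1 - w1)^2 + 0 * g w1)) (at w1)"
    by (rule DERIV_mult[OF dg d2])
  then have "((\<lambda>w. g w * (w - w1)^2) has_field_derivative 0) (at w1)" by simp
  then have "(G has_field_derivative 0) (at w1)"
    by (rule has_field_derivative_transform_within_open[where S="ball w1 r"]) (use r eq in auto)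
  then show ?thesis by (rule DERIV_imp_deriv)
qed

lemma factor_two:
  fixes G :: "complex \<Rightarrow> complex" and a :: complex and \<rho> :: real
  assumes holo: "G holomorphic_on UNIV" and a: "a \<noteq> 0" and rho: "\<rho> > 0"
    and bd: "\<And>w. norm w = \<rho> \<Longrightarrow> norm (G w - a * w^2) < norm a * \<rho>^2"
  obtains w1 w2 K where "norm w1 < \<rho>" "norm w2 < \<rho>" "K holomorphic_on UNIV"
    "\<And>w. G w = a * (w - w1) * (w - w2) * K w"
proof -
  note cr = core_rouche[OF holo a rho bd]
  define Zs where "Zs = {p\<in>ball 0 (2*\<rho>). G p = 0}"
  define A where "A = {p\<in>Zs. norm p < \<rho>}"
  have finZ: "finite Zs" using cr(3) by (simp add: Zs_def)
  have finA: "finite A" using finZ by (simp add: A_def)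
  have Gr: "G (of_real \<rho>) \<noteq> 0"
  proof
    assume "G (of_real \<rho>) = 0"
    then show False using bd[of "of_real \<rho>"] rho by (simp add: norm_mult norm_power)
  qed
  have notc: "\<And>p. p \<in> Zs \<Longrightarrow> norm p \<noteq> \<rho>"
  proof
    fix p assume "p \<in> Zs" "norm p = \<rho>"
    then show False using bd[of p] by (simp add: Zs_def norm_mult norm_power)
  qed
  have wn: "winding_number (circlepath 0 \<rho>) p = (if p \<in> A then 1 else 0)" if "p \<in> Zs" for p
  proof (cases "p \<in> A")
    case True then show ?thesis by (simp add: A_def winding_number_circlepath)
  next
    case False
    then have "norm p > \<rho>" using notc[OF that] that by (auto simp: A_def)
    then have "winding_number (circlepath 0 \<rho>) p = 0"
      using rho by (intro winding_number_zero_outside[of _ "cball 0 \<rho>"]) auto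
    then show ?thesis using False by simp
  qed
  have "(\<Sum>p\<in>Zs. winding_number (circlepath 0 \<rho>) p * of_int (zorder G p))
      = (\<Sum>p\<in>Zs. if p \<in> A then of_int (zorder G p) else 0)"
    by (rule sum.cong) (auto simp: wn)
  also have "\<dots> = (\<Sum>p\<in>A. of_int (zorder G p))"
  proof -
    have "Zs \<inter> A = A" by (auto simp: A_def)
    moreover have "sum (\<lambda>p. of_int (zorder G p)) (Zs \<inter> A) = (\<Sum>p\<in>Zs. if p \<in> A then of_int (zorder G p) else (0::complex))"
      by (rule sum.inter_restrict[OF finZ])
    ultimately show ?thesis by simp
  qed
  finally have "(\<Sum>p\<in>A. of_int (zorder G p) :: complex) = 2" using cr(1) by (simp add: Zs_def)
  then have "(of_int (\<Sum>p\<in>A. zorder G p) :: complex) = of_int 2" by (simp add: of_int_sum)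
  then have sumA: "(\<Sum>p\<in>A. zorder G p) = 2" by (simp only: of_int_eq_iff)
  have zpos: "zorder G p > 0" if "p \<in> A" for p
    using zorder_exist_zero[OF holo, of p] Gr that by (auto simp: A_def Zs_def)
  have cardle: "int (card A) \<le> 2"
  proof -
    have "int (card A) = (\<Sum>p\<in>A. 1::int)" by simp
    also have "\<dots> \<le> (\<Sum>p\<in>A. zorder G p)"
      by (rule sum_mono) (use zpos in fastforce)
    finally show ?thesis using sumA by simp
  qed
  have Ane: "A \<noteq> {}" using sumA by auto
  then have "card A \<noteq> 0" using finA by simp
  then have "card A = 1 \<or> card A = 2" using cardle by linarith
  then show ?thesis
  proof
    assume "card A = 1"
    then obtain w1 where A1: "A = {w1}" by (rule card_1_singletonE)
    then have o2: "zorder G w1 = 2" using sumA by simp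
    have w1: "norm w1 < \<rho>" "G w1 = 0" using A1 by (auto simp: A_def Zs_def)
    obtain F where F: "F holomorphic_on UNIV" "\<And>w. G w = (w - w1) * F w" "F w1 = deriv G w1"
      using factor_one[OF holo w1(2)] by blast
    have "F w1 = 0" using F(3) double_zero_deriv[OF holo w1(2) Gr o2] by simp
    obtain K where K: "K holomorphic_on UNIV" "\<And>w. F w = (w - w1) * K w"
      using factor_one[OF F(1) \<open>F w1 = 0\<close>] by blast
    show ?thesis
    proof (rule that[OF w1(1) w1(1), of "\<lambda>w. K w / a"])
      show "(\<lambda>w. K w / a) holomorphic_on UNIV" using K(1) a by (intro holomorphic_intros)
      show "\<And>w. G w = a * (w - w1) * (w - w1) * (K w / a)" using F(2) K(2) a by simp
    qed
  next
    assume "card A = 2"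
    then obtain w1 w2 where A2: "A = {w1, w2}" "w1 \<noteq> w2" by (meson card_2_iff)
    have w: "norm w1 < \<rho>" "G w1 = 0" "norm w2 < \<rho>" "G w2 = 0" using A2 by (auto simp: A_def Zs_def)
    obtain F where F: "F holomorphic_on UNIV" "\<And>w. G w = (w - w1) * F w"
      using factor_one[OF holo w(2)] by blast
    have "F w2 = 0" using F(2)[of w2] w(4) A2(2) by simp
    obtain K where K: "K holomorphic_on UNIV" "\<And>w. F w = (w - w2) * K w"
      using factor_one[OF F(1) \<open>F w2 = 0\<close>] by blast
    show ?thesis
    proof (rule that[OF w(1) w(3), of "\<lambda>w. K w / a"])
      show "(\<lambda>w. K w / a) holomorphic_on UNIV" using K(1) a by (intro holomorphic_intros)
      show "\<And>w. G w = a * (w - w1) * (w - w2) * (K w / a)" using F(2) K(2) a by simp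
    qed
  qed
qed



lemma tric2: "(tric d c ^^ 2) = (\<lambda>z. (z^d + cnj c)^d + c)"
  by (rule ext) (simp add: tric_def numeral_2_eq_2)

lemma holo_iter: "(tric d c ^^ (2*k)) holomorphic_on UNIV"
proof -
  have eq: "tric d c ^^ (2*k) = (tric d c ^^ 2) ^^ k" by (simp add: funpow_mult)
  have "((\<lambda>z. (z^d + cnj c)^d + c) ^^ n) holomorphic_on UNIV" for n
  proof (induction n)
    case 0 then show ?case by (simp add: id_def)
  next
    case (Suc n)
    have "((\<lambda>z. (z^d + cnj c)^d + c) \<circ> ((\<lambda>z. (z^d + cnj c)^d + c) ^^ n)) holomorphic_on UNIV"
      by (rule holomorphic_on_compose[OF Suc]) (intro holomorphic_intros)
    then show ?case by (simp only: funpow.simps(2))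
  qed
  then show ?thesis unfolding eq tric2 .
qed

lemma cont_iter: "continuous_on UNIV (\<lambda>p::complex\<times>complex. (tric d (fst p) ^^ n) (snd p))"
proof (induction n)
  case 0 then show ?case by (simp add: continuous_on_snd)
next
  case (Suc n)
  have eq: "(\<lambda>p::complex\<times>complex. (tric d (fst p) ^^ Suc n) (snd p)) =
        (\<lambda>p. cnj ((tric d (fst p) ^^ n) (snd p)) ^ d + fst p)" by (simp add: tric_def)
  show ?case unfolding eq by (intro continuous_intros Suc)
qed



theorem proposition4p1:
  fixes d k :: nat and W :: "complex set" and c0 z0 :: complex
    and U0 :: "complex set" and \<phi>0 h :: "complex \<Rightarrow> complex"
  assumes "d \<ge> 2"
    and "odd k"
    and "hyperbolic_component d k W"
    and "c0 \<in> frontier W"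
    and "simple_parabolic_orbit d c0 k z0"
    and "open U0" and "z0 \<in> U0"
    and "\<phi>0 holomorphic_on U0" and "inj_on \<phi>0 U0" and "\<phi>0 z0 = 0"
    and "h holomorphic_on \<phi>0 ` U0" and "h 0 = 1"
    and "\<forall>z\<in>U0. (tric d c0 ^^ (2*k)) z \<in> U0 \<longrightarrow>
           \<phi>0 ((tric d c0 ^^ (2*k)) z) = \<phi>0 z + (\<phi>0 z)^2 * h (\<phi>0 z)"
  shows "\<forall>\<epsilon>>0. \<exists>V U. open V \<and> c0 \<in> V \<and> open U \<and> z0 \<in> U \<and>
           (\<forall>c\<in>V. \<exists>\<phi> a hc.
              \<phi> holomorphic_on U \<and> inj_on \<phi> U \<and>
              hc holomorphic_on \<phi> ` U \<and>
              (\<forall>\<zeta>\<in>\<phi> ` U. norm (hc \<zeta> - 1) < \<epsilon>) \<and>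
              (\<forall>z\<in>U. (tric d c ^^ (2*k)) z \<in> U \<longrightarrow>
                 \<phi> ((tric d c ^^ (2*k)) z) = \<phi> z + ((\<phi> z)^2 - a^2) * hc (\<phi> z)))"
proof (intro allI impI)
  fix \<epsilon> :: real assume eps: "\<epsilon> > 0"
  define F0 where "F0 = tric d c0 ^^ (2*k)"
  obtain A where A: "A \<noteq> 0"
    and bo: "(\<lambda>w. (tric d c0 ^^ (2*k)) (z0 + w) - z0 - w - A * w^2) \<in> O[at 0](\<lambda>w. w^3)"
    using assms(5) unfolding simple_parabolic_orbit_def by blast
  have per: "(tric d c0 ^^ k) z0 = z0"
    using assms(5) by (simp add: simple_parabolic_orbit_def parabolic_orbit_def exact_periodic_def)
  have F0z0: "F0 z0 = z0"
  proof -
    have "F0 = (tric d c0 ^^ k) ^^ 2" unfolding F0_def by (simp add: funpow_mult mult.commute)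
    then show ?thesis using per by (simp add: numeral_2_eq_2)
  qed
  obtain C where C: "C > 0"
    and ev: "eventually (\<lambda>w. norm (F0 (z0 + w) - z0 - w - A * w^2) \<le> C * norm (w^3)) (at 0)"
    using bo unfolding F0_def by (elim landau_o.bigE) auto
  obtain R0 where R0: "R0 > 0"
    and B0': "\<And>w. w \<noteq> 0 \<Longrightarrow> dist w 0 < R0 \<Longrightarrow> norm (F0 (z0 + w) - z0 - w - A * w^2) \<le> C * norm (w^3)"
    using ev unfolding eventually_at by blast
  have B0: "norm (F0 (z0 + w) - z0 - w - A * w^2) \<le> C * norm w ^ 3" if "norm w < R0" for w
  proof (cases "w = 0")
    case True then show ?thesis using F0z0 by simp
  next
    case False then show ?thesis using B0'[of w] that by (simp add: norm_power)
  qed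
  define nA where "nA = norm A"
  have nA: "nA > 0" using A by (simp add: nA_def)
  define e where "e = min \<epsilon> 1"
  have e: "e > 0" "e \<le> 1" "e \<le> \<epsilon>" using eps by (auto simp: e_def)
  define r where "r = min (R0/2) (e * nA / (16*C))"
  have r0: "r > 0" using R0 e nA C by (auto simp: r_def)
  have r1: "r \<le> R0/2" "r \<le> e * nA / (16*C)" by (auto simp: r_def)
  have "C * r \<le> C * (e * nA / (16*C))" using r1(2) C by (intro mult_left_mono) auto
  then have r: "r > 0" "r < R0" "C * r \<le> e * nA / 16" using r0 r1 R0 C by auto
  define \<rho> where "\<rho> = e * r / 48"
  have rho: "\<rho> > 0" "\<rho> \<le> r / 48" using e r by (auto simp: \<rho>_def)
  define \<delta>' where "\<delta>' = nA * \<rho>^2 / 4"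
  have dp: "\<delta>' > 0" using nA rho by (simp add: \<delta>'_def)
  define P where "P = (\<lambda>p::complex\<times>complex. (tric d (fst p) ^^ (2*k)) (snd p))"
  define S where "S = cball c0 1 \<times> cball z0 r"
  have "uniformly_continuous_on S P"
    unfolding S_def P_def
    by (rule compact_uniformly_continuous[OF continuous_on_subset[OF cont_iter]])
       (auto intro: compact_Times)
  then obtain \<delta> where dl: "\<delta> > 0" and uc: "\<And>x x'. x \<in> S \<Longrightarrow> x' \<in> S \<Longrightarrow> dist x' x < \<delta> \<Longrightarrow> dist (P x') (P x) < \<delta>'"
    unfolding uniformly_continuous_on_def using dp by metis
  show "\<exists>V U. open V \<and> c0 \<in> V \<and> open U \<and> z0 \<in> U \<and>
           (\<forall>c\<in>V. \<exists>\<phi> a hc.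
              \<phi> holomorphic_on U \<and> inj_on \<phi> U \<and>
              hc holomorphic_on \<phi> ` U \<and>
              (\<forall>\<zeta>\<in>\<phi> ` U. norm (hc \<zeta> - 1) < \<epsilon>) \<and>
              (\<forall>z\<in>U. (tric d c ^^ (2*k)) z \<in> U \<longrightarrow>
                 \<phi> ((tric d c ^^ (2*k)) z) = \<phi> z + ((\<phi> z)^2 - a^2) * hc (\<phi> z)))"
  proof (rule exI[of _ "ball c0 (min \<delta> 1)"], rule exI[of _ "ball z0 r"], intro conjI ballI)
    show "open (ball c0 (min \<delta> 1))" by auto
    show "open (ball z0 r)" by auto
    show "c0 \<in> ball c0 (min \<delta> 1)" using dl by auto
    show "z0 \<in> ball z0 r" using r by auto
    fix c assume c: "c \<in> ball c0 (min \<delta> 1)"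
    define G where "G = (\<lambda>w. (tric d c ^^ (2*k)) (z0 + w) - z0 - w)"
    have Gholo: "G holomorphic_on UNIV" unfolding G_def
      by (intro holomorphic_intros holomorphic_on_compose[OF _ holomorphic_on_subset[OF holo_iter], unfolded o_def]) auto
    have Gclose: "norm (G w - A * w^2) < \<delta>' + C * norm w ^ 3" if w: "norm w \<le> r" for w
    proof -
      have in1: "(c, z0 + w) \<in> S" "(c0, z0 + w) \<in> S" using c w by (auto simp: S_def dist_norm)
      have "dist (c, z0 + w) (c0, z0 + w) < \<delta>" using c by (simp add: dist_Pair_Pair dist_commute)
      then have "dist (P (c, z0 + w)) (P (c0, z0 + w)) < \<delta>'" using uc in1 by blast
      then have 1: "norm ((tric d c ^^ (2*k)) (z0 + w) - F0 (z0 + w)) < \<delta>'"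
        by (simp add: P_def F0_def dist_norm)
      have 2: "norm (F0 (z0 + w) - z0 - w - A * w^2) \<le> C * norm w ^ 3" using B0 w r by simp
      have "G w - A * w^2 = ((tric d c ^^ (2*k)) (z0 + w) - F0 (z0 + w)) + (F0 (z0 + w) - z0 - w - A * w^2)"
        by (simp add: G_def)
      then have "norm (G w - A * w^2) \<le> norm ((tric d c ^^ (2*k)) (z0 + w) - F0 (z0 + w)) + norm (F0 (z0 + w) - z0 - w - A * w^2)"
        by (metis norm_triangle_ineq)
      then show ?thesis using 1 2 by linarith
    qed
    have bdr: "norm (G w - A * w^2) < nA * \<rho>^2" if "norm w = \<rho>" for w
    proof -
      have "C * \<rho> \<le> C * r" using rho r C by (intro mult_left_mono) auto
      moreover have "e * nA / 16 \<le> nA / 16" using e nA by simp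
      ultimately have "C * \<rho> \<le> nA / 16" using r by linarith
      then have "C * \<rho> * \<rho>^2 \<le> nA / 16 * \<rho>^2" by (rule mult_right_mono) simp
      then have "C * \<rho>^3 \<le> nA * \<rho>^2 / 16" by (simp add: power3_eq_cube power2_eq_square algebra_simps)
      moreover have "norm (G w - A * w^2) < \<delta>' + C * \<rho> ^ 3" using Gclose[of w] that rho by simp
      moreover have "nA * \<rho>^2 > 0" using nA rho by simp
      ultimately show ?thesis unfolding \<delta>'_def by linarith
    qed
    obtain w1 w2 K where w12: "norm w1 < \<rho>" "norm w2 < \<rho>" and Kh: "K holomorphic_on UNIV"
      and Gf: "\<And>w. G w = A * (w - w1) * (w - w2) * K w"
      using factor_two[OF Gholo A rho(1)] bdr by (metis nA_def)
    have sph: "norm (K w - 1) \<le> 3 * e / 4" if w: "norm w = r" for w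
    proof -
      have n1: "norm (w - w1) \<ge> r / 2" using norm_triangle_ineq2[of w w1] w w12 rho by linarith
      have n2: "norm (w - w2) \<ge> r / 2" using norm_triangle_ineq2[of w w2] w w12 rho by linarith
      have "G w - A * (w - w1) * (w - w2) = (G w - A * w^2) + A * ((w1 + w2) * w - w1 * w2)"
        by (simp add: algebra_simps power2_eq_square)
      then have "norm (G w - A * (w - w1) * (w - w2)) \<le> norm (G w - A * w^2) + nA * norm ((w1 + w2) * w - w1 * w2)"
        by (metis nA_def norm_mult norm_triangle_ineq)
      moreover have NN: "norm ((w1 + w2) * w - w1 * w2) \<le> 2 * \<rho> * r + \<rho> * \<rho>"
      proof -
        have a1: "norm ((w1 + w2) * w - w1 * w2) \<le> norm ((w1 + w2) * w) + norm (w1 * w2)"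
          by (rule norm_triangle_ineq4)
        have a2: "norm ((w1 + w2) * w) = norm (w1 + w2) * r" using w by (simp add: norm_mult)
        have a3: "norm (w1 + w2) \<le> 2 * \<rho>" using norm_triangle_ineq[of w1 w2] w12 by linarith
        have a4: "norm (w1 + w2) * r \<le> 2 * \<rho> * r" using a3 r by (intro mult_right_mono) auto
        have a5: "norm (w1 * w2) \<le> \<rho> * \<rho>" unfolding norm_mult using w12 rho
          by (intro mult_mono) auto
        show ?thesis using a1 a2 a4 a5 by linarith
      qed
      then have "nA * norm ((w1 + w2) * w - w1 * w2) \<le> nA * (2 * \<rho> * r + \<rho> * \<rho>)"
        using nA by (intro mult_left_mono) auto
      moreover have "norm (G w - A * w^2) < \<delta>' + C * r ^ 3" using Gclose[of w] w by simp
      moreover have "C * r ^ 3 \<le> e * nA / 16 * r^2"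
        using mult_right_mono[OF r(3), of "r^2"] by (simp add: power3_eq_cube power2_eq_square algebra_simps)
      moreover have "\<delta>' + nA * (2 * \<rho> * r + \<rho> * \<rho>) \<le> e * nA / 16 * r^2"
      proof -
        have "\<rho> * \<rho> \<le> \<rho> * r" using rho r by (intro mult_left_mono) auto
        then have "\<delta>' + nA * (2 * \<rho> * r + \<rho> * \<rho>) \<le> nA * (3 * \<rho> * r)"
          using nA rho by (simp add: \<delta>'_def power2_eq_square algebra_simps)
        also have "\<dots> = e * nA / 16 * r^2" by (simp add: \<rho>_def power2_eq_square)
        finally show ?thesis .
      qed
      ultimately have key: "norm (G w - A * (w - w1) * (w - w2)) \<le> e * nA / 8 * r^2"
        by linarith
      have "G w - A * (w - w1) * (w - w2) = A * (w - w1) * (w - w2) * (K w - 1)"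
        by (simp add: Gf algebra_simps)
      then have eqn: "norm (G w - A * (w - w1) * (w - w2)) = nA * norm (w - w1) * norm (w - w2) * norm (K w - 1)"
        by (simp add: norm_mult nA_def)
      have "nA * (r/2) * (r/2) * norm (K w - 1) \<le> nA * norm (w - w1) * norm (w - w2) * norm (K w - 1)"
        using n1 n2 nA r by (intro mult_right_mono mult_mono mult_left_mono) auto
      then have "nA * (r/2) * (r/2) * norm (K w - 1) \<le> e * nA / 8 * r^2" using key eqn by linarith
      then have "(nA * r^2) * norm (K w - 1) \<le> (nA * r^2) * (e / 2)"
        by (simp add: power2_eq_square algebra_simps)
      then have "norm (K w - 1) \<le> e / 2" using nA r by (simp add: mult_le_cancel_left_pos)
      then show ?thesis using e by linarith
    qed
    have Kbd: "norm (K w - 1) \<le> 3 * e / 4" if "norm w < r" for w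
    proof (rule maximum_modulus_frontier[of "\<lambda>w. K w - 1" "ball 0 r"])
      show "(\<lambda>w. K w - 1) holomorphic_on interior (ball 0 r)"
        by (intro holomorphic_intros holomorphic_on_subset[OF Kh]) auto
      show "continuous_on (closure (ball 0 r)) (\<lambda>w. K w - 1)"
        by (intro continuous_intros holomorphic_on_imp_continuous_on continuous_on_subset[OF holomorphic_on_imp_continuous_on[OF Kh]]) auto
      show "bounded (ball 0 r)" by simp
      show "\<And>z. z \<in> frontier (ball 0 r) \<Longrightarrow> norm (K z - 1) \<le> 3 * e / 4"
        using sph r by (simp add: frontier_ball)
      show "w \<in> ball 0 r" using that by simp
    qed
    define s where "s = (w1 + w2) / 2"
    define \<phi> where "\<phi> = (\<lambda>z. A * (z - z0) - A * s)"
    define hc where "hc = (\<lambda>\<zeta>. K (\<zeta> / A + s))"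
    have hcphi: "hc (\<phi> z) = K (z - z0)" for z
    proof -
      have "(A * (z - z0) - A * s) / A + s = z - z0" using A by (simp add: field_simps)
      then show ?thesis by (simp add: hc_def \<phi>_def)
    qed
      have H1: "\<phi> holomorphic_on ball z0 r" unfolding \<phi>_def by (intro holomorphic_intros)
      have H2: "inj_on \<phi> (ball z0 r)" using A by (auto simp: inj_on_def \<phi>_def)
      have "(K \<circ> (\<lambda>\<zeta>. \<zeta> / A + s)) holomorphic_on UNIV"
        by (rule holomorphic_on_compose) (use A in \<open>auto intro!: holomorphic_intros holomorphic_on_subset[OF Kh]\<close>)
      then have H3: "hc holomorphic_on \<phi> ` ball z0 r"
        by (auto simp: hc_def o_def intro: holomorphic_on_subset)
      have H4: "\<forall>\<zeta>\<in>\<phi> ` ball z0 r. norm (hc \<zeta> - 1) < \<epsilon>"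
      proof
        fix \<zeta> assume "\<zeta> \<in> \<phi> ` ball z0 r"
        then obtain z where z: "z \<in> ball z0 r" "\<zeta> = \<phi> z" by auto
        have "norm (z - z0) < r" using z by (simp add: dist_norm norm_minus_commute)
        then have "norm (K (z - z0) - 1) \<le> 3 * e / 4" by (rule Kbd)
        then show "norm (hc \<zeta> - 1) < \<epsilon>" using z hcphi e by simp
      qed
      have H5: "\<forall>z\<in>ball z0 r. (tric d c ^^ (2*k)) z \<in> ball z0 r \<longrightarrow>
                 \<phi> ((tric d c ^^ (2*k)) z) = \<phi> z + ((\<phi> z)^2 - (A * (w1 - w2) / 2)^2) * hc (\<phi> z)"
      proof (intro ballI impI)
      fix z assume "z \<in> ball z0 r"
      define w where "w = z - z0"
      have Fz: "(tric d c ^^ (2*k)) z = G w + z" by (simp add: G_def w_def)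
      have "\<phi> ((tric d c ^^ (2*k)) z) = A * (G w + w) - A * s" by (simp add: Fz \<phi>_def w_def)
      also have "\<dots> = \<phi> z + ((\<phi> z)^2 - (A * (w1 - w2) / 2)^2) * K w"
        unfolding Gf by (simp add: \<phi>_def w_def s_def field_simps power2_eq_square)
      finally show "\<phi> ((tric d c ^^ (2*k)) z) = \<phi> z + ((\<phi> z)^2 - (A * (w1 - w2) / 2)^2) * hc (\<phi> z)"
        by (simp add: hcphi w_def)
      qed
    show "\<exists>\<phi> a hc.
              \<phi> holomorphic_on ball z0 r \<and> inj_on \<phi> (ball z0 r) \<and>
              hc holomorphic_on \<phi> ` ball z0 r \<and>
              (\<forall>\<zeta>\<in>\<phi> ` ball z0 r. norm (hc \<zeta> - 1) < \<epsilon>) \<and>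
              (\<forall>z\<in>ball z0 r. (tric d c ^^ (2*k)) z \<in> ball z0 r \<longrightarrow>
                 \<phi> ((tric d c ^^ (2*k)) z) = \<phi> z + ((\<phi> z)^2 - a^2) * hc (\<phi> z))"
        using H1 H2 H3 H4 H5 by blast
  qed
qed

end
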